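(* Every quantifier-free formula in the first-order language of graphs has finite VC-dimension on the class $\mathcal J$ of all Johnson graphs; that is, for every quantifier-free formula $\varphi(\bar x;\bar y)$ with its free variables partitioned into tuples $\bar x,\bar y$, there is $N\in\mathbb N$ such that for every $G\in\mathcal J$ the set system $\big(V(G)^{|\bar x|},\{\{\bar a\mid G\models\varphi(\bar a,\bar b)\}\mid \bar b\in V(G)^{|\bar y|}\}\big)$ has VC-dimension at most $N$.
   Context: The first-order language of graphs has atomic formulas $Exy$ (adjacency) and $x=y$, closed under $\neg,\wedge,\vee$ and quantification over vertices; a formula is quantifier-free if it contains no quantifiers. For $m\ge k$ and a set $X$ with $|X|=m$, the Johnson graph $J(m,k)$ has as vertices the $k$-element subsets of $X$, two vertices adjacent iff their intersection has size $k-1$; $\mathcal J=\{J(m,k)\mid k,m\in\mathbb N, k\le m\}$. A set $A\subseteq U$ is shattered by a family $\mathcal S$ of subsets of $U$ if $\{A\cap S\mid S\in\mathcal S\}$ is the power set of $A$; the VC-dimension of $(U,\mathcal S)$ is the supremum of sizes of shattered subsets. *)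

theory Defs
  imports Main "HOL-Library.Extended_Nat"
begin

datatype 'v qf_formula =
    Adj 'v 'v
  | Equal 'v 'v
  | Neg "'v qf_formula"
  | Conj "'v qf_formula" "'v qf_formula"
  | Disj "'v qf_formula" "'v qf_formula"

fun qf_vars :: "'v qf_formula \<Rightarrow> 'v set" where
  "qf_vars (Adj x y) = {x, y}"
| "qf_vars (Equal x y) = {x, y}"
| "qf_vars (Neg f) = qf_vars f"
| "qf_vars (Conj f g) = qf_vars f \<union> qf_vars g"
| "qf_vars (Disj f g) = qf_vars f \<union> qf_vars g"

fun qf_sat :: "('a \<Rightarrow> 'a \<Rightarrow> bool) \<Rightarrow> ('v \<Rightarrow> 'a) \<Rightarrow> 'v qf_formula \<Rightarrow> bool" where
  "qf_sat E s (Adj x y) = E (s x) (s y)"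
| "qf_sat E s (Equal x y) = (s x = s y)"
| "qf_sat E s (Neg f) = (\<not> qf_sat E s f)"
| "qf_sat E s (Conj f g) = (qf_sat E s f \<and> qf_sat E s g)"
| "qf_sat E s (Disj f g) = (qf_sat E s f \<or> qf_sat E s g)"

text \<open>Assignment for the partitioned variables: Inl i is x_i, Inr j is y_j.\<close>
definition tuple_assign :: "'a list \<Rightarrow> 'a list \<Rightarrow> nat + nat \<Rightarrow> 'a" where
  "tuple_assign a b v = (case v of Inl i \<Rightarrow> a ! i | Inr j \<Rightarrow> b ! j)"

definition tuples :: "'a set \<Rightarrow> nat \<Rightarrow> 'a list set" where
  "tuples V n = {xs. length xs = n \<and> set xs \<subseteq> V}"

definition johnson_V :: "nat \<Rightarrow> nat \<Rightarrow> nat set set" where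
  "johnson_V m k = {S. S \<subseteq> {0..<m} \<and> card S = k}"

definition johnson_E :: "nat \<Rightarrow> nat set \<Rightarrow> nat set \<Rightarrow> bool" where
  "johnson_E k S T \<longleftrightarrow> card (S \<inter> T) + 1 = k"

definition shatters :: "'a set set \<Rightarrow> 'a set \<Rightarrow> bool" where
  "shatters \<S> A \<longleftrightarrow> {A \<inter> S | S. S \<in> \<S>} = Pow A"

definition vc_dim :: "'a set \<Rightarrow> 'a set set \<Rightarrow> enat" where
  "vc_dim U \<S> = Sup {enat (card A) | A. A \<subseteq> U \<and> finite A \<and> shatters \<S> A}"

end

theory Submission imports Defs "HOL-Real_Asymp.Real_Asymp" begin

lemma card_image_le_key:
  assumes "finite (g ` S)" "\<And>x y. x \<in> S \<Longrightarrow> y \<in> S \<Longrightarrow> g x = g y \<Longrightarrow> f x = f y"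
  shows "card (f ` S) \<le> card (g ` S)"
proof -
  have "f ` S = (\<lambda>z. f (inv_into S g z)) ` (g ` S)"
  proof (rule set_eqI, rule iffI)
    fix y assume "y \<in> f ` S" then obtain x where x: "x\<in>S" "y = f x" by auto
    have "inv_into S g (g x) \<in> S" "g (inv_into S g (g x)) = g x" using x by (auto intro: inv_into_into f_inv_into_f)
    hence "f (inv_into S g (g x)) = f x" using assms(2) x by metis
    then show "y \<in> (\<lambda>z. f (inv_into S g z)) ` (g ` S)" using x by force
  next
    fix y assume "y \<in> (\<lambda>z. f (inv_into S g z)) ` (g ` S)"
    then obtain x where "x\<in>S" "y = f (inv_into S g (g x))" by auto
    then show "y \<in> f ` S" by (auto intro: inv_into_into)
  qed
  then show ?thesis using assms(1) by (metis card_image_le)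
qed

lemma card_swap:
  assumes "finite w0" "c \<in> w0" "d \<notin> w0"
  shows "card (w \<inter> insert d (w0 - {c})) + (if c \<in> w then 1 else 0)
         = card (w \<inter> w0) + (if d \<in> w then 1 else 0)"
proof -
  have f: "finite (w \<inter> w0)" using assms by simp
  have e: "w \<inter> insert d (w0 - {c}) = (if d \<in> w then insert d (w \<inter> w0 - {c}) else w \<inter> w0 - {c})"
    by auto
  have c1: "card (w \<inter> w0 - {c}) + (if c \<in> w then 1 else 0) = card (w \<inter> w0)"
  proof -
    have "c \<in> w \<Longrightarrow> card (w \<inter> w0) > 0" using f assms card_gt_0_iff by blast
    then show ?thesis using f assms by (auto simp: card_Diff_singleton_if)
  qed
  show ?thesis
  proof (cases "d \<in> w")
    case True
    have "d \<notin> w \<inter> w0 - {c}" using assms by auto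
    then show ?thesis using True e c1 f by simp
  next
    case False
    then show ?thesis using e c1 by simp
  qed
qed

lemma adj_decomp:
  assumes "finite w0" "finite v" "card w0 = k" "card v = k" "card (w0 \<inter> v) + 1 = k"
  obtains c d where "c \<in> w0" "d \<notin> w0" "v = insert d (w0 - {c})"
proof -
  have "card (w0 - v) = 1" using assms card_Diff_subset_Int[of w0 v] by simp
  then obtain c where c: "w0 - v = {c}" by (meson card_1_singletonE)
  have "card (v - w0) = 1" using assms card_Diff_subset_Int[of v w0] by (simp add: Int_commute)
  then obtain d where d: "v - w0 = {d}" by (meson card_1_singletonE)
  have "c \<in> w0" "d \<notin> w0" using c d by auto
  moreover have "v = insert d (w0 - {c})" using c d by blast
  ultimately show ?thesis using that by blast
qed

lemma same_trace:
  assumes "finite w0" "card w0 = k" "c \<in> w0" "d \<notin> w0" "c' \<in> w0" "d' \<notin> w0"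
    and "finite w" "card w = k"
    and cZ: "c \<noteq> c' \<Longrightarrow> c \<notin> Z \<and> c' \<notin> Z" and dZ: "d \<noteq> d' \<Longrightarrow> d \<notin> Z \<and> d' \<notin> Z"
    and Zprop: "card (w - w0) \<le> 2 \<Longrightarrow> card (w0 - w) \<le> 2 \<Longrightarrow> (w - w0) \<union> (w0 - w) \<subseteq> Z"
  shows "(card (w \<inter> insert d (w0 - {c})) + 1 = k) = (card (w \<inter> insert d' (w0 - {c'})) + 1 = k)"
proof (cases "card (w - w0) \<le> 2 \<and> card (w0 - w) \<le> 2")
  case True
  then have sub: "(w - w0) \<union> (w0 - w) \<subseteq> Z" using Zprop by blast
  have cc: "(c \<in> w) = (c' \<in> w)"
  proof (cases "c = c'")
    case False
    then show ?thesis using cZ sub assms by blast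
  qed simp
  have dd: "(d \<in> w) = (d' \<in> w)"
  proof (cases "d = d'")
    case False
    then show ?thesis using dZ sub assms by blast
  qed simp
  show ?thesis using card_swap[OF assms(1,3,4), of w] card_swap[OF assms(1,5,6), of w] cc dd
    by (auto split: if_splits)
next
  case False
  have a1: "card w = card (w \<inter> w0) + card (w - w0)" using assms card_Int_Diff by blast
  have a2: "card w0 = card (w0 \<inter> w) + card (w0 - w)" using assms card_Int_Diff by blast
  have far: "card (w \<inter> w0) + 3 \<le> k" using False a1 a2 assms by (auto simp: Int_commute)
  show ?thesis using card_swap[OF assms(1,3,4), of w] card_swap[OF assms(1,5,6), of w] far
    by (auto split: if_splits)
qed


lemma nbr_traces:
  fixes W V :: "'a set set"
  assumes W: "finite W" "\<And>w. w \<in> W \<Longrightarrow> finite w \<and> card w = k" "card W \<le> R"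
    and V: "\<And>v. v \<in> V \<Longrightarrow> finite v \<and> card v = k"
  shows "card ((\<lambda>v. {w\<in>W. card (w \<inter> v) + 1 = k}) ` V) \<le> 1 + R * (4*R*R + 1)^2"
proof -
  define P where "P = {p \<in> W \<times> W. card (snd p - fst p) \<le> 2 \<and> card (fst p - snd p) \<le> 2}"
  define Z where "Z = (\<Union>p \<in> P. (snd p - fst p) \<union> (fst p - snd p))"
  have finP: "finite P" using W(1) unfolding P_def by simp
  have finZ: "finite Z" unfolding Z_def using finP W(2) P_def by auto
  have "card Z \<le> (\<Sum>p\<in>P. card ((snd p - fst p) \<union> (fst p - snd p)))"
    unfolding Z_def using finP card_UN_le by blast
  also have "\<dots> \<le> card P * 4"
  proof -
    have bnd: "card ((snd p - fst p) \<union> (fst p - snd p)) \<le> 4" if "p \<in> P" for p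
    proof -
      have "card (snd p - fst p) \<le> 2" "card (fst p - snd p) \<le> 2" using that unfolding P_def by auto
      then show ?thesis
        using card_Un_le[of "snd p - fst p" "fst p - snd p"] by linarith
    qed
    show ?thesis using sum_bounded_above[of P _ 4, OF bnd] by simp
  qed
  also have "card P \<le> card (W \<times> W)" unfolding P_def using W(1) by (intro card_mono) auto
  also have "card (W \<times> W) \<le> R * R" using W(3) by (simp add: card_cartesian_product mult_le_mono)
  finally have cardZ: "card Z \<le> 4*R*R" by simp
  define tr where "tr v = {w\<in>W. card (w \<inter> v) + 1 = k}" for v
  define V' where "V' = {v\<in>V. tr v \<noteq> {}}"
  define w0f where "w0f v = (SOME w. w \<in> tr v)" for v
  define cf where "cf v = (SOME c. c \<in> w0f v - v)" for v
  define df where "df v = (SOME d. d \<in> v - w0f v)" for v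
  have decomp: "w0f v \<in> W \<and> cf v \<in> w0f v \<and> df v \<notin> w0f v \<and> v = insert (df v) (w0f v - {cf v})"
    if vV: "v \<in> V'" for v
  proof -
    have "w0f v \<in> tr v" using that unfolding V'_def w0f_def by (simp add: some_in_eq)
    then have w0: "w0f v \<in> W" "card (w0f v \<inter> v) + 1 = k" unfolding tr_def by auto
    obtain c d where cd: "c \<in> w0f v" "d \<notin> w0f v" "v = insert d (w0f v - {c})"
      proof (rule adj_decomp[of "w0f v" v k])
      have "v \<in> V" using vV unfolding V'_def by simp
      then show "finite (w0f v)" "finite v" "card (w0f v) = k" "card v = k" "card (w0f v \<inter> v) + 1 = k"
        using w0 W(2) V by auto
    qed
    have "w0f v - v = {c}" using cd by auto
    then have "cf v = c" unfolding cf_def by simp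
    moreover have "v - w0f v = {d}" using cd by auto
    then have "df v = d" unfolding df_def by simp
    ultimately show ?thesis using cd w0 by simp
  qed
  define key where "key v = (w0f v, if cf v \<in> Z then Some (cf v) else None,
                              if df v \<in> Z then Some (df v) else None)" for v
  define Opt where "Opt = insert None (Some ` Z)"
  have keysub: "key ` V' \<subseteq> W \<times> Opt \<times> Opt" unfolding key_def Opt_def using decomp by (auto split: if_splits)
  have finOpt: "finite Opt" unfolding Opt_def using finZ by simp
  have cardOpt: "card Opt \<le> 4*R*R + 1" unfolding Opt_def using finZ cardZ
    by (simp add: card_image card_insert_if)
  have "card (tr ` V') \<le> card (key ` V')"
  proof (rule card_image_le_key)
    show "finite (key ` V')" using keysub finite_subset W(1) finOpt by blast
  next
    fix v v' assume vv: "v \<in> V'" "v' \<in> V'" "key v = key v'"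
    note d1 = decomp[OF vv(1)] and d2 = decomp[OF vv(2)]
    have w0eq: "w0f v = w0f v'" using vv(3) unfolding key_def by simp
    have cZ: "cf v \<noteq> cf v' \<Longrightarrow> cf v \<notin> Z \<and> cf v' \<notin> Z" using vv(3) unfolding key_def
      by (auto split: if_splits)
    have dZ: "df v \<noteq> df v' \<Longrightarrow> df v \<notin> Z \<and> df v' \<notin> Z" using vv(3) unfolding key_def
      by (auto split: if_splits)
    show "tr v = tr v'"
    proof -
      have "(card (w \<inter> v) + 1 = k) = (card (w \<inter> v') + 1 = k)" if "w \<in> W" for w
      proof -
        have "(card (w \<inter> insert (df v) (w0f v - {cf v})) + 1 = k)
            = (card (w \<inter> insert (df v') (w0f v - {cf v'})) + 1 = k)"
        proof (rule same_trace[where Z=Z])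
          show "finite (w0f v)" "card (w0f v) = k" using W(2) d1 by auto
          show "finite w" "card w = k" using W(2) that by auto
          show "cf v \<in> w0f v" "df v \<notin> w0f v" using d1 by auto
          show "cf v' \<in> w0f v" "df v' \<notin> w0f v" using d2 w0eq by auto
          show "cf v \<noteq> cf v' \<Longrightarrow> cf v \<notin> Z \<and> cf v' \<notin> Z" by (rule cZ)
          show "df v \<noteq> df v' \<Longrightarrow> df v \<notin> Z \<and> df v' \<notin> Z" by (rule dZ)
          assume "card (w - w0f v) \<le> 2" "card (w0f v - w) \<le> 2"
          then have "(w0f v, w) \<in> P" unfolding P_def using d1 that by auto
          then show "(w - w0f v) \<union> (w0f v - w) \<subseteq> Z" unfolding Z_def by force
        qed
        then show ?thesis using d1 d2 w0eq by metis
      qed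
      then show ?thesis unfolding tr_def by auto
    qed
  qed
  also have "\<dots> \<le> card (W \<times> Opt \<times> Opt)" using keysub W(1) finOpt by (intro card_mono) auto
  also have "\<dots> = card W * card Opt * card Opt" by (simp add: card_cartesian_product)
  also have "\<dots> \<le> R * (4*R*R + 1) * (4*R*R + 1)" using W(3) cardOpt by (intro mult_le_mono) auto
  finally have c1': "card (tr ` V') \<le> R * (4*R*R + 1) * (4*R*R + 1)" .
  have c1: "card (tr ` V') \<le> R * (4*R*R + 1)^2" using c1' by (metis power2_eq_square mult.assoc)
  have sub: "tr ` V \<subseteq> insert {} (tr ` V')" unfolding V'_def by auto
  have finT: "finite (tr ` V')"
  proof -
    have "tr ` V' \<subseteq> Pow W" unfolding tr_def by auto
    then show ?thesis using W(1) finite_subset by blast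
  qed
  have "card (tr ` V) \<le> card (insert {} (tr ` V'))" using sub finT by (intro card_mono) auto
  also have "\<dots> \<le> 1 + card (tr ` V')" using finT by (simp add: card_insert_if)
  finally show ?thesis using c1 unfolding tr_def by simp
qed

lemma prof_count:
  fixes W V :: "'a set set"
  assumes W: "finite W" "\<And>w. w \<in> W \<Longrightarrow> finite w \<and> card w = k" "card W \<le> R"
    and V: "\<And>v. v \<in> V \<Longrightarrow> finite v \<and> card v = k"
  shows "card ((\<lambda>v. ({w\<in>W. card (w \<inter> v) + 1 = k}, {w\<in>W. w = v})) ` V)
     \<le> (1 + R * (4*R*R + 1)^2) * (R + 1)"
proof -
  define tr where "tr v = {w\<in>W. card (w \<inter> v) + 1 = k}" for v
  define Q where "Q = insert {} ((\<lambda>w. {w}) ` W)"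
  have sub: "(\<lambda>v. ({w\<in>W. card (w \<inter> v) + 1 = k}, {w\<in>W. w = v})) ` V \<subseteq> (tr ` V) \<times> Q"
    unfolding tr_def Q_def by auto
  have finT: "finite (tr ` V)"
  proof -
    have "tr ` V \<subseteq> Pow W" unfolding tr_def by auto
    then show ?thesis using W(1) finite_subset by blast
  qed
  have finQ: "finite Q" using W(1) unfolding Q_def by simp
  have cQ: "card Q \<le> R + 1" unfolding Q_def using W(1,3) card_insert_le_m1
    by (metis (no_types, lifting) Suc_eq_plus1 card_image_le card_insert_if finite_imageI le_SucI le_trans not_less_eq_eq)
  have "card ((\<lambda>v. ({w\<in>W. card (w \<inter> v) + 1 = k}, {w\<in>W. w = v})) ` V) \<le> card ((tr ` V) \<times> Q)"
    using sub finT finQ by (intro card_mono) auto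
  also have "\<dots> = card (tr ` V) * card Q" by (simp add: card_cartesian_product)
  also have "\<dots> \<le> (1 + R * (4*R*R + 1)^2) * (R + 1)"
    using nbr_traces[OF W V] cQ unfolding tr_def by (intro mult_le_mono) auto
  finally show ?thesis .
qed


lemma sat_det:
  assumes "qf_vars \<phi> \<subseteq> Inl ` {..<kx} \<union> Inr ` {..<ky}"
   and h1: "\<And>i j. i < kx \<Longrightarrow> j < ky \<Longrightarrow> E (a!i) (b!j) = E (a!i) (b'!j)"
   and h2: "\<And>i j. i < kx \<Longrightarrow> j < ky \<Longrightarrow> E (b!j) (a!i) = E (b'!j) (a!i)"
   and h3: "\<And>i j. i < kx \<Longrightarrow> j < ky \<Longrightarrow> (a!i = b!j) = (a!i = b'!j)"
   and h4: "\<And>i j. i < ky \<Longrightarrow> j < ky \<Longrightarrow> E (b!i) (b!j) = E (b'!i) (b'!j)"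
   and h5: "\<And>i j. i < ky \<Longrightarrow> j < ky \<Longrightarrow> (b!i = b!j) = (b'!i = b'!j)"
  shows "qf_sat E (tuple_assign a b) \<phi> = qf_sat E (tuple_assign a b') \<phi>"
  using assms(1)
proof (induction \<phi>)
  case (Adj x y) then show ?case using h1 h2 h4 by (auto simp: tuple_assign_def)
next
  case (Equal x y)
  have h3': "\<And>i j. i < kx \<Longrightarrow> j < ky \<Longrightarrow> (b!j = a!i) = (b'!j = a!i)" using h3 by metis
  from Equal show ?case using h3 h3' h5 by (auto simp: tuple_assign_def; metis h3)
qed auto

lemma poly_exp_bound: "\<exists>N::nat. \<forall>n::nat. 2^n \<le> C * (n+1)^d \<longrightarrow> n \<le> N"
proof -
  have "(\<lambda>n::nat. real C * (real n + 1)^d / 2^n) \<longlonglongrightarrow> 0" by real_asymp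
  then have "eventually (\<lambda>n. real C * (real n + 1)^d / 2^n < 1) sequentially"
    by (rule order_tendstoD) simp
  then obtain N where N: "\<And>n. n \<ge> N \<Longrightarrow> real C * (real n + 1)^d / 2^n < 1"
    by (auto simp: eventually_sequentially)
  show ?thesis
  proof (intro exI allI impI)
    fix n :: nat assume h: "2^n \<le> C*(n+1)^d"
    show "n \<le> N"
    proof (rule ccontr)
      assume "\<not> n \<le> N"
      then have "real C * (real n + 1)^d < 2^n" using N[of n] by (simp add: divide_less_eq)
      moreover have "real (2^n) \<le> real (C*(n+1)^d)" using h by (simp only: of_nat_le_iff)
      ultimately show False by (simp add: add.commute)
    qed
  qed
qed

lemma pow_aux: "(S::nat)*(4*S^2)^2 = 16*S^5"
proof -
  have "(4*S^2)^2 = 16*S^4" by (simp add: power_mult_distrib flip: power_mult)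
  then show ?thesis by (simp add: mult.left_commute flip: power_Suc)
qed

lemma arith_bound: "(1 + R*(4*R*R+1)^2)*(R+1) \<le> 17*((R::nat)+1)^6"
proof -
  have a: "4*R*R+1 \<le> 4*(R+1)^2" by (simp add: power2_eq_square algebra_simps)
  have b: "(4*R*R+1)^2 \<le> (4*(R+1)^2)^2" using a power_mono by blast
  have c: "R*(4*R*R+1)^2 \<le> (R+1)*(4*(R+1)^2)^2" using b by (intro mult_le_mono) auto
  have d: "(R+1)*(4*(R+1)^2)^2 = 16*(R+1)^5"
by (rule pow_aux)
  have e: "1 \<le> (R+1)^5" by simp
  have "1 + R*(4*R*R+1)^2 \<le> 17*(R+1)^5" using c d e by linarith
  then have "(1 + R*(4*R*R+1)^2)*(R+1) \<le> 17*(R+1)^5*(R+1)" by (intro mult_le_mono) auto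
  also have "\<dots> = 17*(R+1)^6" by (simp only: mult.assoc flip: power_Suc2) simp
  finally show ?thesis .
qed


lemma pow_aux2: "(17*((a::nat)*b)^6)^y * (u*u) = (17*a^6)^y * u * u * b^(6*y)"
proof -
  have e: "b^(6*y) = (b^6)^y" by (rule power_mult)
  have e2: "b^(y*6) = (b^6)^y" by (metis power_mult mult.commute)
  show ?thesis by (simp only: e e2 power_mult_distrib mult_ac)
qed

theorem mainTheorem9:
  fixes \<phi> :: "(nat + nat) qf_formula" and kx ky :: nat
  assumes "qf_vars \<phi> \<subseteq> Inl ` {..<kx} \<union> Inr ` {..<ky}"
  shows "\<exists>N::nat. \<forall>m k. k \<le> m \<longrightarrow>
           vc_dim (tuples (johnson_V m k) kx)
             {{a \<in> tuples (johnson_V m k) kx. qf_sat (johnson_E k) (tuple_assign a b) \<phi>}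
               | b. b \<in> tuples (johnson_V m k) ky}
           \<le> enat N"
proof -
  define C where "C = (17 * (kx+1)^6)^ky * 2^(ky*ky) * 2^(ky*ky)"
  define d where "d = 6*ky"
  obtain N where N: "\<And>n. 2^n \<le> C*(n+1)^d \<Longrightarrow> n \<le> N" using poly_exp_bound[of C d] by blast
  show ?thesis
  proof (intro exI allI impI)
    fix m k :: nat assume "k \<le> m"
    define V where "V = johnson_V m k"
    define B where "B = tuples V ky"
    define F where "F = {{a \<in> tuples V kx. qf_sat (johnson_E k) (tuple_assign a b) \<phi>} | b. b \<in> B}"
    have Vprop: "\<And>v. v \<in> V \<Longrightarrow> finite v \<and> card v = k"
      unfolding V_def johnson_V_def using finite_subset by auto
    have finV: "finite V" unfolding V_def johnson_V_def
      by (rule finite_subset[of _ "Pow {0..<m}"]) auto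
    have bound: "card A \<le> N" if A: "A \<subseteq> tuples V kx" "finite A" "shatters F A" for A
    proof -
      define n where "n = card A"
      define W where "W = (\<Union>a\<in>A. set a)"
      have WV: "W \<subseteq> V" using A(1) unfolding W_def tuples_def by auto
      have finW: "finite W" using WV finV finite_subset by blast
      have cardW: "card W \<le> kx * n"
      proof -
        have "card W \<le> (\<Sum>a\<in>A. card (set a))" unfolding W_def using A(2) card_UN_le by blast
        also have "\<dots> \<le> (\<Sum>a\<in>A. kx)"
        proof (rule sum_mono)
          fix a assume "a \<in> A"
          then have "length a = kx" using A(1) unfolding tuples_def by auto
          then show "card (set a) \<le> kx" using card_length by metis
        qed
        also have "\<dots> = kx * n" by (simp add: n_def)
        finally show ?thesis .
      qed
      define prof where "prof v = ({w\<in>W. card (w \<inter> v) + 1 = k}, {w\<in>W. w = v})" for v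
      have WP: "\<And>w. w \<in> W \<Longrightarrow> finite w \<and> card w = k" using WV Vprop by blast
      have cprof: "card (prof ` V) \<le> (1 + (kx*n) * (4*(kx*n)*(kx*n) + 1)^2) * (kx*n + 1)"
        unfolding prof_def by (rule prof_count[OF finW WP cardW Vprop])
      have finprof: "finite (prof ` V)" using finV by simp
      define key where "key b = (map prof b,
          {p \<in> {..<ky}\<times>{..<ky}. johnson_E k (b!fst p) (b!snd p)},
          {p \<in> {..<ky}\<times>{..<ky}. b!fst p = b!snd p})" for b
      define KS where "KS = {xs. set xs \<subseteq> prof ` V \<and> length xs = ky}
          \<times> Pow ({..<ky}\<times>{..<ky}) \<times> Pow ({..<ky}\<times>{..<ky})"
      have keyKS: "key ` B \<subseteq> KS" unfolding key_def KS_def B_def tuples_def by (auto simp: subset_iff)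
      have finKS: "finite KS" unfolding KS_def using finprof by (simp add: finite_lists_length_eq)
      have cardKS: "card KS = card (prof ` V)^ky * (2^(ky*ky) * 2^(ky*ky))"
        unfolding KS_def using finprof by (simp add: card_cartesian_product card_lists_length_eq card_Pow)
      define tr where "tr b = {a \<in> A. qf_sat (johnson_E k) (tuple_assign a b) \<phi>}" for b
      have PowA: "Pow A = tr ` B"
      proof -
        have "Pow A = {A \<inter> S | S. S \<in> F}" using A(3) unfolding shatters_def by simp
        also have "\<dots> = (\<lambda>b. A \<inter> {a \<in> tuples V kx. qf_sat (johnson_E k) (tuple_assign a b) \<phi>}) ` B"
          unfolding F_def by auto
        also have "\<dots> = tr ` B"
        proof (rule image_cong[OF refl])
          fix b show "A \<inter> {a \<in> tuples V kx. qf_sat (johnson_E k) (tuple_assign a b) \<phi>} = tr b"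
            using A(1) unfolding tr_def by auto
        qed
        finally show ?thesis .
      qed
      have "2^n = card (Pow A)" using A(2) by (simp add: card_Pow n_def)
      also have "\<dots> = card (tr ` B)" using PowA by simp
      also have "\<dots> \<le> card (key ` B)"
      proof (rule card_image_le_key)
        show "finite (key ` B)" using keyKS finKS finite_subset by blast
      next
        fix b b' assume bb: "b \<in> B" "b' \<in> B" "key b = key b'"
        have lb: "length b = ky" "length b' = ky" using bb unfolding B_def tuples_def by auto
        have mp: "map prof b = map prof b'" using bb(3) unfolding key_def by simp
        have pj: "prof (b!j) = prof (b'!j)" if "j < ky" for j
          using mp lb that by (metis nth_map)
        have s1: "{p \<in> {..<ky}\<times>{..<ky}. johnson_E k (b!fst p) (b!snd p)}
                = {p \<in> {..<ky}\<times>{..<ky}. johnson_E k (b'!fst p) (b'!snd p)}"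
          using bb(3) unfolding key_def by simp
        have s2: "{p \<in> {..<ky}\<times>{..<ky}. b!fst p = b!snd p}
                = {p \<in> {..<ky}\<times>{..<ky}. b'!fst p = b'!snd p}"
          using bb(3) unfolding key_def by simp
        have h4: "johnson_E k (b!i) (b!j) = johnson_E k (b'!i) (b'!j)" if "i < ky" "j < ky" for i j
        proof -
          have "((i,j) \<in> {p \<in> {..<ky}\<times>{..<ky}. johnson_E k (b!fst p) (b!snd p)})
              = ((i,j) \<in> {p \<in> {..<ky}\<times>{..<ky}. johnson_E k (b'!fst p) (b'!snd p)})"
            using s1 by simp
          then show ?thesis using that by simp
        qed
        have h5: "(b!i = b!j) = (b'!i = b'!j)" if "i < ky" "j < ky" for i j
        proof -
          have "((i,j) \<in> {p \<in> {..<ky}\<times>{..<ky}. b!fst p = b!snd p})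
              = ((i,j) \<in> {p \<in> {..<ky}\<times>{..<ky}. b'!fst p = b'!snd p})"
            using s2 by simp
          then show ?thesis using that by simp
        qed
        have "qf_sat (johnson_E k) (tuple_assign a b) \<phi> = qf_sat (johnson_E k) (tuple_assign a b') \<phi>"
          if aA: "a \<in> A" for a
        proof (rule sat_det[OF assms])
          have la: "length a = kx" using aA A(1) unfolding tuples_def by auto
          have aW: "a!i \<in> W" if "i < kx" for i
            using aA la that nth_mem unfolding W_def by blast
          fix i j assume ij: "i < kx" "j < ky"
          have f: "(a!i \<in> fst (prof (b!j))) = (a!i \<in> fst (prof (b'!j)))"
            "(a!i \<in> snd (prof (b!j))) = (a!i \<in> snd (prof (b'!j)))" using pj ij by auto
          show "johnson_E k (a!i) (b!j) = johnson_E k (a!i) (b'!j)"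
            using f(1) aW ij unfolding prof_def johnson_E_def by simp
          show "johnson_E k (b!j) (a!i) = johnson_E k (b'!j) (a!i)"
            using f(1) aW ij unfolding prof_def johnson_E_def by (simp add: Int_commute)
          show "(a!i = b!j) = (a!i = b'!j)"
            using f(2) aW ij unfolding prof_def by simp
        next
          fix i j assume "i < ky" "j < ky"
          then show "johnson_E k (b!i) (b!j) = johnson_E k (b'!i) (b'!j)" "(b!i = b!j) = (b'!i = b'!j)"
            using h4 h5 by auto
        qed
        then show "tr b = tr b'" unfolding tr_def by auto
      qed
      also have "\<dots> \<le> card KS" using keyKS finKS by (rule card_mono[rotated])
      also have "\<dots> = card (prof ` V)^ky * (2^(ky*ky) * 2^(ky*ky))" by (rule cardKS)
      also have "\<dots> \<le> (17*((kx+1)*(n+1))^6)^ky * (2^(ky*ky) * 2^(ky*ky))"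
      proof (intro mult_le_mono power_mono le_refl)
        have "card (prof ` V) \<le> 17*(kx*n+1)^6" using cprof arith_bound[of "kx*n"] by linarith
        also have "\<dots> \<le> 17*((kx+1)*(n+1))^6"
          by (intro mult_le_mono le_refl power_mono) (auto simp: algebra_simps)
        finally show "card (prof ` V) \<le> 17*((kx+1)*(n+1))^6" .
      qed auto
      also have "\<dots> = C*(n+1)^d" unfolding C_def d_def
        by (rule pow_aux2)
      finally show ?thesis using N n_def by blast
    qed
    show "vc_dim (tuples (johnson_V m k) kx)
             {{a \<in> tuples (johnson_V m k) kx. qf_sat (johnson_E k) (tuple_assign a b) \<phi>}
               | b. b \<in> tuples (johnson_V m k) ky}
           \<le> enat N"
      unfolding vc_dim_def
    proof (rule Sup_least)
      fix x assume "x \<in> {enat (card A) | A. A \<subseteq> tuples (johnson_V m k) kx \<and> finite A \<and>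
             shatters {{a \<in> tuples (johnson_V m k) kx. qf_sat (johnson_E k) (tuple_assign a b) \<phi>}
               | b. b \<in> tuples (johnson_V m k) ky} A}"
      then obtain A where A: "x = enat (card A)" "A \<subseteq> tuples (johnson_V m k) kx" "finite A"
          "shatters {{a \<in> tuples (johnson_V m k) kx. qf_sat (johnson_E k) (tuple_assign a b) \<phi>}
               | b. b \<in> tuples (johnson_V m k) ky} A"
        by blast
      have FF: "{{a \<in> tuples (johnson_V m k) kx. qf_sat (johnson_E k) (tuple_assign a b) \<phi>}
               | b. b \<in> tuples (johnson_V m k) ky} = F" unfolding F_def B_def V_def by (rule refl)
      have "card A \<le> N" using bound[of A] A(2,3,4) unfolding FF V_def by blast
      then show "x \<le> enat N" using A(1) by simp
    qed
  qed
qed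

end
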